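(* Suppose that either $r>\dfrac{\beta b}{m+\mu}$, or $\beta b(r-n)+rn(m+\mu)>0$. Then system (S) has an equilibrium of the form $E_5=\big(0,\,\tfrac{b}{m+\mu},\,M_5,\,N_5\big)$ with $M_5>0$ and $N_5>0$.
   Context: The model (S) is the system of ODEs for healthy bees $B$, infected bees $I$, healthy mites $M$ and infected mites $N$: $$B'=b\frac{B}{B+I}-\lambda BN-\gamma BI-mB,$$ $$I'=b\frac{I}{B+I}+\lambda BN+\gamma BI-(m+\mu)I,$$ $$M'=r\Big(1-\frac{M+N}{K}\Big)(M+N)-\beta MI-\delta MN-eMB,$$ $$N'=-nN-pN(N+M)+\beta MI+\delta MN-eNB,$$ where all parameters $b,\lambda,\gamma,m,\mu,r,K,\beta,\delta,e,n,p$ are positive constants. *)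

theory Defs
  imports Complex_Main
begin

definition S_field ::
  "real \<Rightarrow> real \<Rightarrow> real \<Rightarrow> real \<Rightarrow> real \<Rightarrow> real \<Rightarrow> real \<Rightarrow> real \<Rightarrow> real \<Rightarrow> real \<Rightarrow> real \<Rightarrow> real
   \<Rightarrow> real \<times> real \<times> real \<times> real \<Rightarrow> real \<times> real \<times> real \<times> real" where
  "S_field b lam gam m mu r K beta delta e n p = (\<lambda>(B, I, M, N).
     ( b * B / (B + I) - lam * B * N - gam * B * I - m * B,
       b * I / (B + I) + lam * B * N + gam * B * I - (m + mu) * I,
       r * (1 - (M + N) / K) * (M + N) - beta * M * I - delta * M * N - e * M * B,
       - n * N - p * N * (N + M) + beta * M * I + delta * M * N - e * N * B))"

definition S_equilibrium ::
  "real \<Rightarrow> real \<Rightarrow> real \<Rightarrow> real \<Rightarrow> real \<Rightarrow> real \<Rightarrow> real \<Rightarrow> real \<Rightarrow> real \<Rightarrow> real \<Rightarrow> real \<Rightarrow> real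
   \<Rightarrow> real \<times> real \<times> real \<times> real \<Rightarrow> bool" where
  "S_equilibrium b lam gam m mu r K beta delta e n p x \<longleftrightarrow>
     S_field b lam gam m mu r K beta delta e n p x = (0, 0, 0, 0)"

end

theory Submission
  imports Defs
begin

theorem mainTheorem3:
  fixes b lam gam m mu r K beta delta e n p :: real
  assumes "b > 0" "lam > 0" "gam > 0" "m > 0" "mu > 0" "r > 0" "K > 0"
    "beta > 0" "delta > 0" "e > 0" "n > 0" "p > 0"
  assumes "r > beta * b / (m + mu) \<or> beta * b * (r - n) + r * n * (m + mu) > 0"
  shows "\<exists>M5 N5. M5 > 0 \<and> N5 > 0 \<and>
           S_equilibrium b lam gam m mu r K beta delta e n p (0, b / (m + mu), M5, N5)"
proof -
  define i where "i = b / (m + mu)"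
  define c where "c = beta * i"
  have ipos: "i > 0" using assms unfolding i_def by simp
  have cpos: "c > 0" using assms ipos unfolding c_def by simp
  have cond: "c * (r - n) + r * n > 0"
  proof (cases "r > c")
    case True
    have "c * (r - n) + r * n = c * r + n * (r - c)" by (simp add: algebra_simps)
    moreover have "n * (r - c) > 0" using True assms by simp
    ultimately show ?thesis using cpos assms by (smt (verit) mult_pos_pos)
  next
    case False
    then have h: "beta * b * (r - n) + r * n * (m + mu) > 0"
      using assms(13) unfolding c_def i_def by auto
    have mm: "m + mu > 0" using assms by simp
    have "c * (r - n) + r * n = (beta * b * (r - n) + r * n * (m + mu)) / (m + mu)"
      unfolding c_def i_def using mm by (simp add: field_simps)
    then show ?thesis using h mm by simp
  qed
  define D where "D = (\<lambda>T::real. n + p * T)"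
  define A where "A = (\<lambda>T::real. r * T * (1 - T / K))"
  define q where "q = (\<lambda>T::real. r * (1 - T / K) * (n + p*T)^2
      - ((n + p*T) - r * (1 - T / K)) * (c * (n + p*T) + delta * (r * T * (1 - T / K))))"
  have q0: "q 0 > 0"
  proof -
    have "q 0 = n * (c * (r - n) + r * n)" unfolding q_def by (simp add: power2_eq_square algebra_simps)
    thus ?thesis using cond assms by simp
  qed
  have qK: "q K < 0"
  proof -
    have "q K = - (n + p*K) * (c * (n + p*K))" unfolding q_def using assms by (simp add: algebra_simps)
    moreover have "n + p*K > 0" using assms by (simp add: add_pos_pos)
    ultimately show ?thesis using cpos by (simp add: mult_pos_pos mult_neg_pos)
  qed
  have "\<exists>T\<ge>0. T \<le> K \<and> q T = 0"
    by (rule IVT2) (use q0 qK assms in \<open>auto simp: q_def intro!: continuous_intros\<close>)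
  then obtain T where T: "0 \<le> T" "T \<le> K" "q T = 0" by blast
  have Tpos: "T > 0" using T q0 by (cases "T = 0") auto
  have TK: "T < K" using T qK by (cases "T = K") auto
  have Dpos: "D T > 0" unfolding D_def using assms Tpos by (simp add: add_pos_pos)
  have Apos: "A T > 0" unfolding A_def using assms Tpos TK by simp
  have key: "A T * (D T)^2 = (T * D T - A T) * (c * D T + delta * A T)"
  proof -
    have "T * q T = 0" using T by simp
    moreover have "A T * (D T)^2 - (T * D T - A T) * (c * D T + delta * A T) = T * q T"
      unfolding q_def A_def D_def using assms(7) by (simp add: field_simps power2_eq_square)
    ultimately show ?thesis using T(3) by simp
  qed
  define N where "N = A T / D T"
  define M where "M = T - N"
  have Npos: "N > 0" unfolding N_def using Apos Dpos by simp
  have MN: "M * (c + delta * N) = N * D T"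
  proof -
    have "M * (c + delta * N) = (T * D T - A T) * (c * D T + delta * A T) / (D T)^2"
      unfolding M_def N_def using Dpos by (simp add: field_simps power2_eq_square)
    also have "\<dots> = A T" using key[symmetric] Dpos by simp
    also have "\<dots> = N * D T" unfolding N_def using Dpos by simp
    finally show ?thesis .
  qed
  have Mpos: "M > 0"
  proof -
    have "N * D T > 0" using Npos Dpos by simp
    hence "M * (c + delta * N) > 0" using MN by simp
    moreover have "c + delta * N > 0" using cpos Npos assms by (simp add: add_pos_pos)
    ultimately show ?thesis by (simp add: zero_less_mult_iff)
  qed
  have sumT: "M + N = T" unfolding M_def by simp
  have AN: "A T = N * D T" unfolding N_def using Dpos by simp
  have e3: "r * (1 - (M + N) / K) * (M + N) - beta * M * i - delta * M * N = 0"
  proof -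
    have "r * (1 - (M + N) / K) * (M + N) = A T" unfolding sumT A_def by simp
    moreover have "beta * M * i + delta * M * N = M * (c + delta * N)" unfolding c_def by (simp add: algebra_simps)
    ultimately show ?thesis using MN AN by linarith
  qed
  have e4: "- n * N - p * N * (N + M) + beta * M * i + delta * M * N = 0"
  proof -
    have "n * N + p * N * (N + M) = N * D T" unfolding D_def using sumT by (simp add: algebra_simps)
    moreover have "beta * M * i + delta * M * N = M * (c + delta * N)" unfolding c_def by (simp add: algebra_simps)
    ultimately show ?thesis using MN by linarith
  qed
  have e2: "b * i / (0 + i) + lam * 0 * N + gam * 0 * i - (m + mu) * i = 0"
  proof -
    have "b * i / (0 + i) = b" using ipos by simp
    moreover have "(m + mu) * i = b" unfolding i_def using assms by simp
    ultimately show ?thesis by simp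
  qed
  show ?thesis
    apply (rule exI[of _ M], rule exI[of _ N])
    using Mpos Npos e2 e3 e4 unfolding S_equilibrium_def S_field_def i_def[symmetric]
    by simp
qed

end
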